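(* Let $\boldsymbol\Sigma$ be the covariance matrix of a pure two-mode Gaussian state of a signal mode $S$ and an idler mode $I$. Then there exist a phase rotation acting on $S$ and a symplectic transformation acting on $I$ such that the transformed covariance matrix has the form $\begin{bmatrix}\boldsymbol\Sigma_S&\boldsymbol\Sigma_{SI}\\ \boldsymbol\Sigma_{SI}^\top&\boldsymbol\Sigma_I\end{bmatrix}$ with $$\boldsymbol\Sigma_S=\mathrm{diag}(ar,\,ar^{-1}),\quad \boldsymbol\Sigma_I=\mathrm{diag}(a,a),\quad \boldsymbol\Sigma_{SI}=\sqrt{a^2-\tfrac14}\begin{bmatrix}\sqrt r\cos\phi&\sqrt r\sin\phi\\ \sqrt{r^{-1}}\sin\phi&-\sqrt{r^{-1}}\cos\phi\end{bmatrix}$$ for some $a\ge\tfrac12$, $r>0$ and $\phi\in\mathbb{R}$.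
   Context: Quadrature vector $\mathbf R=(q_S,p_S,q_I,p_I)^\top$ with $[R_i,R_j]=\mathrm{i}\Omega_{ij}$, $\boldsymbol\Omega=\mathbb{I}_2\otimes\begin{bmatrix}0&1\\-1&0\end{bmatrix}$; covariance matrix $\Sigma_{ij}=\tfrac12\langle R_iR_j+R_jR_i\rangle-\langle R_i\rangle\langle R_j\rangle$ (vacuum has $\boldsymbol\Sigma=\mathbb{I}_4/2$). A phase rotation on $S$ acts on the covariance matrix by conjugation with $\mathbf R(\varphi)\oplus\mathbb{I}_2$, $\mathbf R(\varphi)=\begin{bmatrix}\cos\varphi&-\sin\varphi\\ \sin\varphi&\cos\varphi\end{bmatrix}$; a symplectic transformation $\mathbf S_I$ on $I$ acts by conjugation with $\mathbb{I}_2\oplus\mathbf S_I$. *)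

theory Defs
  imports "HOL-Analysis.Analysis" "HOL-Library.Numeral_Type"
begin

text \<open>Quadrature ordering R = (q_S, p_S, q_I, p_I), indexed by the type 4 as 0,1,2,3.
  Mode S occupies indices 0,1 and mode I occupies indices 2,3.\<close>

definition mat2 :: "real \<Rightarrow> real \<Rightarrow> real \<Rightarrow> real \<Rightarrow> real^2^2" where
  "mat2 a b c d = (\<chi> i j. if i = 0 then (if j = 0 then a else b) else (if j = 0 then c else d))"

definition in_first_mode :: "4 \<Rightarrow> bool" where
  "in_first_mode i \<longleftrightarrow> i = 0 \<or> i = 1"

definition local_idx :: "4 \<Rightarrow> 2" where
  "local_idx i = (if i = 0 \<or> i = 2 then 0 else 1)"

definition blk :: "real^2^2 \<Rightarrow> real^2^2 \<Rightarrow> real^2^2 \<Rightarrow> real^2^2 \<Rightarrow> real^4^4" where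
  "blk A B C D = (\<chi> i j.
     if in_first_mode i then
       (if in_first_mode j then A $ local_idx i $ local_idx j else B $ local_idx i $ local_idx j)
     else
       (if in_first_mode j then C $ local_idx i $ local_idx j else D $ local_idx i $ local_idx j))"

definition J2 :: "real^2^2" where
  "J2 = mat2 0 1 (-1) 0"

definition Omega :: "real^4^4" where
  "Omega = blk J2 0 0 J2"

definition symplectic4 :: "real^4^4 \<Rightarrow> bool" where
  "symplectic4 S \<longleftrightarrow> S ** Omega ** transpose S = Omega"

definition symplectic2 :: "real^2^2 \<Rightarrow> bool" where
  "symplectic2 S \<longleftrightarrow> S ** J2 ** transpose S = J2"

text \<open>Covariance matrix of a pure two-mode Gaussian state: a Gaussian unitary
  (symplectic S) applied to the vacuum, whose covariance matrix is I_4/2.\<close>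
definition pure_gaussian_cov :: "real^4^4 \<Rightarrow> bool" where
  "pure_gaussian_cov \<Sigma> \<longleftrightarrow> (\<exists>S. symplectic4 S \<and> \<Sigma> = S ** ((1/2) *\<^sub>R mat 1) ** transpose S)"

definition rot :: "real \<Rightarrow> real^2^2" where
  "rot \<phi> = mat2 (cos \<phi>) (- sin \<phi>) (sin \<phi>) (cos \<phi>)"

end

theory Submission
  imports Defs
begin
lemma UNIV4: "(UNIV::4 set) = {0,1,2,3}"
proof -
  have "(4::4) = 0" by simp
  then show ?thesis using UNIV_4 by auto
qed
lemma sum4: "sum f (UNIV::4 set) = f 0 + f 1 + f 2 + f 3"
  unfolding UNIV4 by (simp add: ac_simps)
lemma all4: "(\<forall>i::4. P i) \<longleftrightarrow> P 0 \<and> P 1 \<and> P 2 \<and> P 3"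
  by (metis UNIV4 UNIV_I insertE empty_iff)

lemma OO: "Omega ** Omega = (-1) *\<^sub>R mat 1"
  by (simp add: vec_eq_iff all4 matrix_matrix_mult_def sum4 Omega_def blk_def in_first_mode_def
     local_idx_def J2_def mat2_def mat_def)

lemma msc1: fixes A :: "real^'n^'m" shows "A ** (k *\<^sub>R B) = k *\<^sub>R (A ** B)"
  by (simp add: matrix_scalar_ac scalar_matrix_assoc)
lemma msc2: fixes A :: "real^'n^'m" shows "(k *\<^sub>R A) ** B = k *\<^sub>R (A ** B)"
  by (simp add: scalar_matrix_assoc)

lemma sympT: assumes "symplectic4 S" shows "transpose S ** Omega ** S = Omega"
proof -
  let ?X = "(-1) *\<^sub>R (Omega ** transpose S ** Omega)"
  have 1: "S ** (Omega ** transpose S ** Omega) = Omega ** Omega"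
    using assms unfolding symplectic4_def by (simp only: matrix_mul_assoc)
  have "S ** ?X = mat 1" unfolding msc1 1 OO by simp
  then have "?X ** S = mat 1" using matrix_left_right_inverse by blast
  then have 2: "(-1) *\<^sub>R (Omega ** transpose S ** Omega ** S) = mat 1" by (simp only: msc2)
  have "Omega ** ((-1) *\<^sub>R (Omega ** transpose S ** Omega ** S)) = Omega" unfolding 2 by simp
  then have "(-1) *\<^sub>R ((Omega ** Omega) ** (transpose S ** Omega ** S)) = Omega"
    by (simp only: msc1 matrix_mul_assoc)
  then show ?thesis unfolding OO msc2 by simp
qed

lemma pureOmega: assumes "symplectic4 S" "Sig = S ** ((1/2) *\<^sub>R mat 1) ** transpose S"
  shows "Sig ** Omega ** Sig = (1/4) *\<^sub>R Omega"
proof -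
  have e: "Sig = (1/2) *\<^sub>R (S ** transpose S)" using assms(2)
    by (simp only: msc1 msc2 matrix_mul_rid)
  have "Sig ** Omega ** Sig = (1/4) *\<^sub>R (S ** (transpose S ** Omega ** S) ** transpose S)"
    unfolding e by (simp only: msc1 msc2 matrix_mul_assoc scaleR_scaleR) simp
  also have "\<dots> = (1/4) *\<^sub>R Omega" using sympT[OF assms(1)] assms(1)
    unfolding symplectic4_def by (simp only: matrix_mul_assoc)
  finally show ?thesis .
qed

lemma MOM: "(M ** Omega ** N) $ i $ j = M$i$0*N$1$j - M$i$1*N$0$j + M$i$2*N$3$j - M$i$3*N$2$j"
  by (simp add: matrix_matrix_mult_def sum4 Omega_def blk_def in_first_mode_def local_idx_def J2_def mat2_def)

lemma Om: "Omega$0$1 = 1" "Omega$2$3 = 1" "Omega$0$2 = 0" "Omega$0$3 = 0"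
  by (simp_all add: Omega_def blk_def in_first_mode_def local_idx_def J2_def mat2_def)

lemma final:
  fixes M :: "real^4^4"
  assumes sym: "transpose M = M" and om: "M ** Omega ** M = (1/4) *\<^sub>R Omega"
    and h01: "M$0$1 = 0" and h23: "M$2$3 = 0" and h22: "M$2$2 = a" and h33: "M$3$3 = a"
    and apos: "a > 0" and m0: "M$0$0 > 0"
  shows "\<exists>r \<phi>. a \<ge> 1/2 \<and> r > 0 \<and> M =
        blk (mat2 (a * r) 0 0 (a / r))
            (sqrt (a\<^sup>2 - 1/4) *\<^sub>R mat2 (sqrt r * cos \<phi>) (sqrt r * sin \<phi>)
                                      (sqrt (inverse r) * sin \<phi>) (- sqrt (inverse r) * cos \<phi>))
            (transpose (sqrt (a\<^sup>2 - 1/4) *\<^sub>R mat2 (sqrt r * cos \<phi>) (sqrt r * sin \<phi>)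
                                      (sqrt (inverse r) * sin \<phi>) (- sqrt (inverse r) * cos \<phi>)))
            (mat2 a 0 0 a)"
proof -
  have S: "M$j$i = M$i$j" for i j
  proof -
    have "transpose M $ i $ j = M $ i $ j" using sym by simp
    then show ?thesis by (simp add: transpose_def)
  qed
  have E: "M$i$0*M$1$j - M$i$1*M$0$j + M$i$2*M$3$j - M$i$3*M$2$j = ((1/4) *\<^sub>R Omega)$i$j"
    for i j
  proof -
    have "(M ** Omega ** M)$i$j = ((1/4) *\<^sub>R Omega)$i$j" using om by simp
    then show ?thesis unfolding MOM .
  qed
  note ev = Om
  have e01: "M$0$0 * M$1$1 + M$0$2 * M$1$3 - M$0$3 * M$1$2 = 1/4"
    using E[of 0 1] h01 S[of 0 1] S[of 0 2] S[of 0 3] S[of 1 2] S[of 1 3] by (simp add: ev algebra_simps)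
  have e23: "M$0$2 * M$1$3 - M$0$3 * M$1$2 + a * a = 1/4"
    using E[of 2 3] h22 h33 h23 S[of 0 2] S[of 0 3] S[of 1 2] S[of 1 3] S[of 2 3] by (simp add: ev algebra_simps)
  have e02: "M$0$0 * M$1$2 - a * M$0$3 = 0"
    using E[of 0 2] h01 h22 h23 S[of 0 2] S[of 0 3] S[of 1 2] S[of 1 3] S[of 2 3] by (simp add: ev algebra_simps)
  have e03: "M$0$0 * M$1$3 + a * M$0$2 = 0"
    using E[of 0 3] h01 h33 h23 S[of 0 2] S[of 0 3] S[of 1 2] S[of 1 3] S[of 2 3] by (simp add: ev algebra_simps)
  define r where "r = M$0$0 / a"
  have rpos: "r > 0" using m0 apos by (simp add: r_def)
  have l2: "M$1$1 = a / r" using e01 e23 apos m0 by (simp add: r_def field_simps)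
  have c01: "M$0$3 = r * M$1$2" using e02 apos by (simp add: r_def field_simps)
  have c00: "M$0$2 = - r * M$1$3" using e03 apos by (simp add: r_def field_simps)
  define p where "p = - sqrt r * M$1$3"
  define q where "q = sqrt r * M$1$2"
  have sr: "sqrt r * sqrt r = r" using rpos by simp
  have pq: "p\<^sup>2 + q\<^sup>2 = a\<^sup>2 - 1/4"
  proof -
    have "p\<^sup>2 + q\<^sup>2 = r * ((M$1$3)\<^sup>2 + (M$1$2)\<^sup>2)" unfolding p_def q_def
      using rpos by (simp add: power_mult_distrib algebra_simps)
    also have "\<dots> = a\<^sup>2 - 1/4" using e23 c01 c00 by (simp add: power2_eq_square algebra_simps)
    finally show ?thesis .
  qed
  have z: "0 \<le> p\<^sup>2 + q\<^sup>2" by simp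
  have "1/4 \<le> a\<^sup>2" using pq z by linarith
  then have a4: "1/4 \<le> a*a" by (simp add: power2_eq_square)
  have ahalf: "a \<ge> 1/2"
  proof (rule ccontr)
    assume "\<not> a \<ge> 1/2"
    then have "a < 1/2" by simp
    then have "a*a < (1/2)*(1/2)" using apos by (intro mult_strict_mono) auto
    then show False using a4 by simp
  qed
  define k where "k = sqrt (a\<^sup>2 - 1/4)"
  have "0 \<le> a\<^sup>2 - 1/4" using a4 by (simp add: power2_eq_square)
  then have "k\<^sup>2 = a\<^sup>2 - 1/4" by (simp add: k_def)
  then have kk: "k\<^sup>2 = p\<^sup>2 + q\<^sup>2" using pq by simp
  obtain \<phi> where cp: "k * cos \<phi> = p" and sp: "k * sin \<phi> = q"
  proof (cases "k = 0")
    case True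
    then have "p\<^sup>2 + q\<^sup>2 = 0" using kk by simp
    then have "p = 0" "q = 0" by (simp_all add: sum_power2_eq_zero_iff)
    then show ?thesis using that[of 0] True by simp
  next
    case False
    have "(p/k)\<^sup>2 + (q/k)\<^sup>2 = (p\<^sup>2 + q\<^sup>2) / k\<^sup>2" by (simp add: power_divide add_divide_distrib)
    also have "\<dots> = 1" unfolding kk[symmetric] using False by simp
    finally have "(p/k)\<^sup>2 + (q/k)\<^sup>2 = 1" .
    then obtain t where "p/k = cos t" "q/k = sin t" by (rule sincos_total_2pi)
    then show ?thesis using that[of t] False by (simp add: field_simps)
  qed
  have isr: "sqrt (inverse r) = 1 / sqrt r" by (simp add: real_sqrt_inverse divide_inverse)
  have srp: "sqrt r > 0" using rpos by simp
  show ?thesis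
  proof (intro exI conjI)
    show "a \<ge> 1/2" by (fact ahalf)
    show "r > 0" by (fact rpos)
    have A: "M$0$0 = a * r" using apos by (simp add: r_def)
    have B1: "k * (sqrt r * cos \<phi>) = M$0$2" using cp c00 sr unfolding p_def by (metis mult.assoc mult.left_commute mult_minus_left)
    have B2: "k * (sqrt r * sin \<phi>) = M$0$3" using sp c01 sr unfolding q_def by (metis mult.assoc mult.left_commute)
    have B3: "k * (sqrt (inverse r) * sin \<phi>) = M$1$2" using sp srp unfolding q_def isr by (simp add: field_simps)
    have B4: "k * (- sqrt (inverse r) * cos \<phi>) = M$1$3" using cp srp unfolding p_def isr by (simp add: field_simps)
    show "M = blk (mat2 (a * r) 0 0 (a / r))
            (sqrt (a\<^sup>2 - 1/4) *\<^sub>R mat2 (sqrt r * cos \<phi>) (sqrt r * sin \<phi>)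
                                      (sqrt (inverse r) * sin \<phi>) (- sqrt (inverse r) * cos \<phi>))
            (transpose (sqrt (a\<^sup>2 - 1/4) *\<^sub>R mat2 (sqrt r * cos \<phi>) (sqrt r * sin \<phi>)
                                      (sqrt (inverse r) * sin \<phi>) (- sqrt (inverse r) * cos \<phi>)))
            (mat2 a 0 0 a)"
      unfolding k_def[symmetric]
      using A l2 B1 B2 B3 B4 h01 h23 h22 h33 S
      by (simp add: vec_eq_iff all4 blk_def in_first_mode_def local_idx_def mat2_def transpose_def)
  qed
qed

lemma UNIV2: "(UNIV::2 set) = {0,1}"
proof -
  have "(2::2) = 0" by simp
  then show ?thesis using UNIV_2 by auto
qed
lemma sum2: "sum f (UNIV::2 set) = f 0 + f 1"
  unfolding UNIV2 by simp
lemma all2: "(\<forall>i::2. P i) \<longleftrightarrow> P 0 \<and> P 1"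
  by (metis UNIV2 UNIV_I insertE empty_iff)

lemma symp2: assumes "Q$0$0*Q$1$1 - Q$0$1*Q$1$0 = 1" shows "symplectic2 Q"
  using assms unfolding symplectic2_def
  by (simp add: vec_eq_iff all2 matrix_matrix_mult_def sum2 J2_def mat2_def transpose_def algebra_simps)

lemma blkT1:
  fixes P Q :: "real^2^2"
  assumes dP: "P$0$0*P$1$1 - P$0$1*P$1$0 = 1" and dQ: "Q$0$0*Q$1$1 - Q$0$1*Q$1$0 = 1"
  shows "blk P 0 0 Q ** Omega ** transpose (blk P 0 0 Q) = Omega"
  using dP dQ unfolding Omega_def
  by (simp add: vec_eq_iff all4 matrix_matrix_mult_def sum4 blk_def in_first_mode_def local_idx_def
      J2_def mat2_def transpose_def algebra_simps)

lemma blkT2: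
  fixes P Q :: "real^2^2"
  assumes dP: "P$0$0*P$1$1 - P$0$1*P$1$0 = 1" and dQ: "Q$0$0*Q$1$1 - Q$0$1*Q$1$0 = 1"
  shows "transpose (blk P 0 0 Q) ** Omega ** blk P 0 0 Q = Omega"
  using dP dQ unfolding Omega_def
  by (simp add: vec_eq_iff all4 matrix_matrix_mult_def sum4 blk_def in_first_mode_def local_idx_def
      J2_def mat2_def transpose_def algebra_simps)
lemma Mentries:
  fixes P Q :: "real^2^2" and X :: "real^4^4"
  defines "M \<equiv> blk P 0 0 Q ** X ** transpose (blk P 0 0 Q)"
  shows "M$0$0 = P$0$0*(X$0$0*P$0$0 + X$0$1*P$0$1) + P$0$1*(X$1$0*P$0$0 + X$1$1*P$0$1)"
    and "M$0$1 = P$0$0*(X$0$0*P$1$0 + X$0$1*P$1$1) + P$0$1*(X$1$0*P$1$0 + X$1$1*P$1$1)"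
    and "M$2$2 = Q$0$0*(X$2$2*Q$0$0 + X$2$3*Q$0$1) + Q$0$1*(X$3$2*Q$0$0 + X$3$3*Q$0$1)"
    and "M$2$3 = Q$0$0*(X$2$2*Q$1$0 + X$2$3*Q$1$1) + Q$0$1*(X$3$2*Q$1$0 + X$3$3*Q$1$1)"
    and "M$3$3 = Q$1$0*(X$2$2*Q$1$0 + X$2$3*Q$1$1) + Q$1$1*(X$3$2*Q$1$0 + X$3$3*Q$1$1)"
  unfolding M_def
  by (simp_all add: matrix_matrix_mult_def sum4 blk_def in_first_mode_def local_idx_def transpose_def algebra_simps)

lemma theta_exists: "\<exists>\<theta>::real. cos \<theta> * sin \<theta> * d + ((cos \<theta>)\<^sup>2 - (sin \<theta>)\<^sup>2) * e = 0"
proof (cases "d = 0 \<and> e = 0")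
  case True then show ?thesis by auto
next
  case False
  define n where "n = sqrt (d\<^sup>2 + 4*e\<^sup>2)"
  have "d\<^sup>2 + e\<^sup>2 > 0" using False by (simp add: sum_power2_gt_zero_iff)
  then have pos: "d\<^sup>2 + 4*e\<^sup>2 > 0" using zero_le_power2[of e] by linarith
  then have n0: "n \<noteq> 0" "n\<^sup>2 = d\<^sup>2 + 4*e\<^sup>2" by (simp_all add: n_def)
  have "(d/n)\<^sup>2 + (-2*e/n)\<^sup>2 = (d\<^sup>2 + 4*e\<^sup>2)/n\<^sup>2" by (simp add: power_divide add_divide_distrib power_mult_distrib)
  also have "\<dots> = 1" unfolding n0(2)[symmetric] using n0(1) by simp
  finally obtain t where t: "d/n = cos t" "-2*e/n = sin t" by (rule sincos_total_2pi)
  have c2: "cos t = (cos (t/2))\<^sup>2 - (sin (t/2))\<^sup>2" using cos_double[of "t/2"] by simp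
  have s2: "sin t = 2 * sin (t/2) * cos (t/2)" using sin_double[of "t/2"] by simp
  have "cos (t/2) * sin (t/2) * d + ((cos (t/2))\<^sup>2 - (sin (t/2))\<^sup>2) * e = sin t / 2 * d + cos t * e"
    unfolding c2 s2 by simp
  also have "\<dots> = 0" unfolding t[symmetric] using n0(1) by (simp add: field_simps)
  finally show ?thesis by blast
qed

lemma posfacts:
  fixes S Sig :: "real^4^4"
  assumes sy: "symplectic4 S" and sd: "Sig = S ** ((1/2) *\<^sub>R mat 1) ** transpose S"
  shows "transpose Sig = Sig" "Sig$0$0 > 0" "Sig$1$1 > 0" "Sig$2$2 > 0"
    "Sig$2$2 * Sig$3$3 - Sig$2$3 * Sig$2$3 > 0"
proof -
  have e: "Sig = (1/2) *\<^sub>R (S ** transpose S)" using sd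
    by (simp only: msc1 msc2 matrix_mul_rid)
  have ent: "Sig$i$j = (1/2) * (S$i$0*S$j$0 + S$i$1*S$j$1 + S$i$2*S$j$2 + S$i$3*S$j$3)" for i j
    unfolding e by (simp add: matrix_matrix_mult_def sum4 transpose_def)
  show "transpose Sig = Sig" by (simp add: vec_eq_iff transpose_def ent mult.commute)
  have sE: "S$i$0*S$j$1 - S$i$1*S$j$0 + S$i$2*S$j$3 - S$i$3*S$j$2 = Omega$i$j" for i j
  proof -
    have "(S ** Omega ** transpose S)$i$j = Omega$i$j" using sy unfolding symplectic4_def by simp
    then show ?thesis unfolding MOM by (simp add: transpose_def)
  qed
  have s01: "S$0$0*S$1$1 - S$0$1*S$1$0 + S$0$2*S$1$3 - S$0$3*S$1$2 = 1" using sE[of 0 1] Om by simp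
  have s23: "S$2$0*S$3$1 - S$2$1*S$3$0 + S$2$2*S$3$3 - S$2$3*S$3$2 = 1" using sE[of 2 3] Om by simp
  have sq4: "a*a + b*b + c*c + d*d > 0" if "a*w - b*x + c*y - d*z = (1::real)" for a b c d w x y z
  proof -
    have "a \<noteq> 0 \<or> b \<noteq> 0 \<or> c \<noteq> 0 \<or> d \<noteq> 0" using that by auto
    moreover have "a*a \<ge> 0" "b*b \<ge> 0" "c*c \<ge> 0" "d*d \<ge> 0" by simp_all
    moreover have "a*a > 0" if "a \<noteq> 0" using that not_real_square_gt_zero by blast
    moreover have "b*b > 0" if "b \<noteq> 0" using that not_real_square_gt_zero by blast
    moreover have "c*c > 0" if "c \<noteq> 0" using that not_real_square_gt_zero by blast
    moreover have "d*d > 0" if "d \<noteq> 0" using that not_real_square_gt_zero by blast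
    ultimately show ?thesis by linarith
  qed
  have sq4': "a*a + b*b + c*c + d*d > 0" if "w*a - x*b + y*c - z*d = (1::real)" for a b c d w x y z
    using sq4[of a w b x c y d z] that by (simp add: mult.commute)
  show "Sig$0$0 > 0" unfolding ent using sq4[OF s01] by simp
  have "S$1$1*S$1$1 + S$1$0*S$1$0 + S$1$3*S$1$3 + S$1$2*S$1$2 > 0"
    by (rule sq4'[where w="S$0$0" and x="S$0$1" and y = "S$0$2" and z = "S$0$3"]) (use s01 in \<open>simp add: algebra_simps\<close>)
  then show "Sig$1$1 > 0" unfolding ent by simp
  show "Sig$2$2 > 0" unfolding ent using sq4[OF s23] by simp
  define u0 where "u0 = S$2$0" define u1 where "u1 = S$2$1" define u2 where "u2 = S$2$2" define u3 where "u3 = S$2$3"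
  define w0 where "w0 = S$3$0" define w1 where "w1 = S$3$1" define w2 where "w2 = S$3$2" define w3 where "w3 = S$3$3"
  have h: "u0*w1 - u1*w0 + (u2*w3 - u3*w2) = 1" using s23 by (simp add: u0_def u1_def u2_def u3_def w0_def w1_def w2_def w3_def)
  have L: "4 * (Sig$2$2 * Sig$3$3 - Sig$2$3 * Sig$2$3) =
     (u0*w1 - u1*w0)\<^sup>2 + (u2*w3 - u3*w2)\<^sup>2 + (u0*w2 - u2*w0)\<^sup>2 + (u0*w3 - u3*w0)\<^sup>2
     + (u1*w2 - u2*w1)\<^sup>2 + (u1*w3 - u3*w1)\<^sup>2"
    unfolding ent u0_def u1_def u2_def u3_def w0_def w1_def w2_def w3_def
    by (simp add: power2_eq_square algebra_simps)
  have "(u0*w1 - u1*w0)\<^sup>2 + (u2*w3 - u3*w2)\<^sup>2 > 0"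
    using h by (simp add: sum_power2_gt_zero_iff)
  then have "4 * (Sig$2$2 * Sig$3$3 - Sig$2$3 * Sig$2$3) > 0" unfolding L
    using zero_le_power2[of "u0*w2 - u2*w0"] zero_le_power2[of "u0*w3 - u3*w0"]
      zero_le_power2[of "u1*w2 - u2*w1"] zero_le_power2[of "u1*w3 - u3*w1"] by linarith
  then show "Sig$2$2 * Sig$3$3 - Sig$2$3 * Sig$2$3 > 0" by simp
qed

lemma m2: "mat2 a b c d $ 0 $ 0 = a" "mat2 a b c d $ 0 $ 1 = b" "mat2 a b c d $ 1 $ 0 = c" "mat2 a b c d $ 1 $ 1 = d"
  by (simp_all add: mat2_def)

theorem lemma3:
  fixes \<Sigma> :: "real^4^4"
  assumes "pure_gaussian_cov \<Sigma>"
  shows "\<exists>\<phi>0 SI a r \<phi>. symplectic2 SI \<and> a \<ge> 1/2 \<and> r > 0 \<and>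
     (let T = blk (rot \<phi>0) 0 0 SI in
        T ** \<Sigma> ** transpose T =
        blk (mat2 (a * r) 0 0 (a / r))
            (sqrt (a\<^sup>2 - 1/4) *\<^sub>R mat2 (sqrt r * cos \<phi>) (sqrt r * sin \<phi>)
                                      (sqrt (inverse r) * sin \<phi>) (- sqrt (inverse r) * cos \<phi>))
            (transpose (sqrt (a\<^sup>2 - 1/4) *\<^sub>R mat2 (sqrt r * cos \<phi>) (sqrt r * sin \<phi>)
                                      (sqrt (inverse r) * sin \<phi>) (- sqrt (inverse r) * cos \<phi>)))
            (mat2 a 0 0 a))"
proof -
  obtain S where sy: "symplectic4 S" and sd: "\<Sigma> = S ** ((1/2) *\<^sub>R mat 1) ** transpose S"
    using assms unfolding pure_gaussian_cov_def by blast
  note pf = posfacts[OF sy sd]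
  have om: "\<Sigma> ** Omega ** \<Sigma> = (1/4) *\<^sub>R Omega" by (rule pureOmega[OF sy sd])
  have Ssym: "\<Sigma>$j$i = \<Sigma>$i$j" for i j
  proof -
    have "transpose \<Sigma> $ i $ j = \<Sigma> $ i $ j" using pf(1) by simp
    then show ?thesis by (simp add: transpose_def)
  qed
  have E: "\<Sigma>$i$0*\<Sigma>$1$j - \<Sigma>$i$1*\<Sigma>$0$j + \<Sigma>$i$2*\<Sigma>$3$j - \<Sigma>$i$3*\<Sigma>$2$j = ((1/4) *\<^sub>R Omega)$i$j" for i j
  proof -
    have "(\<Sigma> ** Omega ** \<Sigma>)$i$j = ((1/4) *\<^sub>R Omega)$i$j" using om by simp
    then show ?thesis unfolding MOM .
  qed
  have detAB: "\<Sigma>$0$0 * \<Sigma>$1$1 - \<Sigma>$0$1 * \<Sigma>$0$1 = \<Sigma>$2$2 * \<Sigma>$3$3 - \<Sigma>$2$3 * \<Sigma>$2$3"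
    using E[of 0 1] E[of 2 3] Om Ssym[of 0 2] Ssym[of 1 2] Ssym[of 1 3] mult.commute[of "\<Sigma>$2$1" "\<Sigma>$0$3"]
    by simp
  define D where "D = \<Sigma>$2$2 * \<Sigma>$3$3 - \<Sigma>$2$3 * \<Sigma>$2$3"
  have Dpos: "D > 0" using pf(5) by (simp add: D_def)
  obtain \<theta> where th: "cos \<theta> * sin \<theta> * (\<Sigma>$0$0 - \<Sigma>$1$1) + ((cos \<theta>)\<^sup>2 - (sin \<theta>)\<^sup>2) * \<Sigma>$0$1 = 0"
    using theta_exists by blast
  define b where "b = sqrt D"
  define sx where "sx = sqrt (\<Sigma>$2$2)"
  define t where "t = sqrt b"
  have bpos: "b > 0" using Dpos by (simp add: b_def)
  have sxpos: "sx > 0" using pf(4) by (simp add: sx_def)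
  have tpos: "t > 0" using bpos by (simp add: t_def)
  have x_eq: "\<Sigma>$2$2 = sx * sx" using pf(4) by (simp add: sx_def)
  have b_eq: "b = t * t" using bpos by (simp add: t_def)
  have D_eq: "D = b * b" using Dpos by (simp add: b_def)
  define Q where "Q = mat2 (t/sx) 0 (- \<Sigma>$2$3/(t * sx)) (sx/t)"
  define P where "P = rot \<theta>"
  have dP: "P$0$0*P$1$1 - P$0$1*P$1$0 = 1" by (simp add: P_def rot_def m2 power2_eq_square[symmetric])
  have dQ: "Q$0$0*Q$1$1 - Q$0$1*Q$1$0 = 1" using sxpos tpos by (simp add: Q_def m2)
  define T where "T = blk P 0 0 Q"
  define M where "M = T ** \<Sigma> ** transpose T"
  have Msym: "transpose M = M" unfolding M_def
    by (simp add: matrix_transpose_mul pf(1) matrix_mul_assoc)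
  have Mom: "M ** Omega ** M = (1/4) *\<^sub>R Omega"
  proof -
    have "M ** Omega ** M = T ** (\<Sigma> ** (transpose T ** Omega ** T) ** \<Sigma>) ** transpose T"
      unfolding M_def by (simp only: matrix_mul_assoc)
    also have "\<dots> = T ** ((1/4) *\<^sub>R Omega) ** transpose T"
      unfolding T_def blkT2[OF dP dQ] om[unfolded matrix_mul_assoc] by (simp only: matrix_mul_assoc)
    also have "\<dots> = (1/4) *\<^sub>R (T ** Omega ** transpose T)" by (simp only: msc1 msc2)
    also have "\<dots> = (1/4) *\<^sub>R Omega" unfolding T_def blkT1[OF dP dQ] ..
    finally show ?thesis .
  qed
  note ME = Mentries[of P Q \<Sigma>, folded T_def, folded M_def]
  have M01: "M$0$1 = 0" unfolding ME using th Ssym[of 0 1]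
    by (simp add: P_def rot_def m2 power2_eq_square algebra_simps)
  have M22: "M$2$2 = b" unfolding ME using sxpos tpos x_eq b_eq
    by (simp add: Q_def m2 field_simps)
  have M23: "M$2$3 = 0" unfolding ME using sxpos tpos x_eq
    by (simp add: Q_def m2 field_simps)
  have M33: "M$3$3 = b" unfolding ME using sxpos tpos x_eq b_eq D_eq Ssym[of 2 3]
    by (simp add: Q_def m2 field_simps D_def)
  have M00: "M$0$0 > 0"
  proof -
    let ?c = "cos \<theta>" and ?s = "sin \<theta>" and ?a = "\<Sigma>$0$0" and ?e = "\<Sigma>$0$1" and ?f = "\<Sigma>$1$1"
    have m: "M$0$0 = ?c*?c*?a - 2*?c*?s*?e + ?s*?s*?f" unfolding ME using Ssym[of 0 1]
      by (simp add: P_def rot_def m2 algebra_simps)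
    have id: "?a * M$0$0 = (?c*?a - ?s*?e)\<^sup>2 + ?s\<^sup>2 * D"
      unfolding m D_def detAB[symmetric] by (simp add: power2_eq_square algebra_simps)
    have "(?c*?a - ?s*?e)\<^sup>2 + ?s\<^sup>2 * D > 0"
    proof (cases "?s = 0")
      case True
      then have "?c \<noteq> 0" using sin_cos_squared_add[of \<theta>] by auto
      then show ?thesis using True pf(2) by simp
    next
      case False
      then have "?s\<^sup>2 * D > 0" using Dpos by simp
      then show ?thesis using zero_le_power2[of "?c*?a - ?s*?e"] by linarith
    qed
    then have "?a * M$0$0 > 0" unfolding id .
    then show ?thesis using pf(2) by (simp add: zero_less_mult_iff)
  qed
  obtain r \<phi> where fin: "b \<ge> 1/2" "r > 0" and Meq: "M =
        blk (mat2 (b * r) 0 0 (b / r))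
            (sqrt (b\<^sup>2 - 1/4) *\<^sub>R mat2 (sqrt r * cos \<phi>) (sqrt r * sin \<phi>)
                                      (sqrt (inverse r) * sin \<phi>) (- sqrt (inverse r) * cos \<phi>))
            (transpose (sqrt (b\<^sup>2 - 1/4) *\<^sub>R mat2 (sqrt r * cos \<phi>) (sqrt r * sin \<phi>)
                                      (sqrt (inverse r) * sin \<phi>) (- sqrt (inverse r) * cos \<phi>)))
            (mat2 b 0 0 b)"
    using final[OF Msym Mom M01 M23 M22 M33 bpos M00] by blast
  show ?thesis
  proof (intro exI conjI)
    show "symplectic2 Q" by (rule symp2[OF dQ])
    show "b \<ge> 1/2" by (fact fin(1))
    show "r > 0" by (fact fin(2))
    show "let T = blk (rot \<theta>) 0 0 Q in
        T ** \<Sigma> ** transpose T =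
        blk (mat2 (b * r) 0 0 (b / r))
            (sqrt (b\<^sup>2 - 1/4) *\<^sub>R mat2 (sqrt r * cos \<phi>) (sqrt r * sin \<phi>)
                                      (sqrt (inverse r) * sin \<phi>) (- sqrt (inverse r) * cos \<phi>))
            (transpose (sqrt (b\<^sup>2 - 1/4) *\<^sub>R mat2 (sqrt r * cos \<phi>) (sqrt r * sin \<phi>)
                                      (sqrt (inverse r) * sin \<phi>) (- sqrt (inverse r) * cos \<phi>)))
            (mat2 b 0 0 b)"
      unfolding Let_def using Meq by (simp add: M_def T_def P_def)
  qed
qed

end
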